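(* Let $k$ be a field, $\lambda\in k$, and let $A$ be either $k[x]/(x^2-\lambda)$ or $k[x]/(x^2-x-\lambda)$. Equip $A$ with its universal calculus, which is free as a left module on $\omega=\mathrm{d}x$ with relation $\omega x=-x\omega$ in the first case and $\omega x=\omega-x\omega$ in the second case, and with $\Omega^2=A\,\mathrm{Vol}$ free on $\mathrm{Vol}=\omega\wedge\omega$, $\mathrm{d}\omega=0$. Then: (a) $\mathrm{Vol}$ is central, and every element $g\,\omega\otimes\omega$ ($g\in A$) of $\Omega^1\otimes_A\Omega^1$ is central; no nonzero such element is quantum symmetric. (b) The only torsion free left connection on $\Omega^1$ is $\nabla\omega=0$; it is a bimodule connection with $\sigma(\omega\otimes\omega)=-\omega\otimes\omega$. (c) For invertible $g\in A$, the metric $g\,\omega\otimes\omega$ admits a quantum Levi-Civita connection if and only if $g\in k\setminus\{0\}$, in which case the QLC is unique and equals $\nabla\omega=0$.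
   Context: A differential calculus on a unital algebra $A$ is an $A$-bimodule $\Omega^1$ with $\mathrm{d}:A\to\Omega^1$ satisfying the Leibniz rule and with $\Omega^1$ spanned by elements $a\,\mathrm{d}b$; it is extended to degree 2 by a bimodule $\Omega^2$, an associative product $\wedge$ and $\mathrm{d}:\Omega^1\to\Omega^2$ with $\mathrm{d}^2=0$ and the graded Leibniz rule. An element $g\in\Omega^1\otimes_A\Omega^1$ is central if $ag=ga$ for all $a\in A$; quantum symmetric if $\wedge(g)=0$; it is a (quantum) metric if invertible, i.e. there is a bimodule map $(\ ,\ ):\Omega^1\otimes_A\Omega^1\to A$ with $((\eta,\ )\otimes\mathrm{id})g=\eta=(\mathrm{id}\otimes(\ ,\eta))g$ for all $\eta\in\Omega^1$. A left connection is a linear $\nabla:\Omega^1\to\Omega^1\otimes_A\Omega^1$ with $\nabla(a\omega)=a\nabla\omega+\mathrm{d}a\otimes\omega$; a bimodule connection additionally has a bimodule map $\sigma$ with $\nabla(\omega a)=(\nabla\omega)a+\sigma(\omega\otimes\mathrm{d}a)$. $\nabla$ is torsion free if $\wedge\nabla=\mathrm{d}$ on $\Omega^1$, and metric compatible if $(\nabla\otimes\mathrm{id})g+(\sigma\otimes\mathrm{id})(\mathrm{id}\otimes\nabla)g=0$. A quantum Levi-Civita connection (QLC) for $g$ is a torsion free, metric compatible bimodule connection. *)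

theory Defs
  imports "HOL-Computational_Algebra.Polynomial"
begin

text \<open>
The Boolean parameter c selects the case: c = True means p = x^2 - lam,
c = False means p = x^2 - x - lam.  Elements of A are represented by their
reduced representatives, i.e. polynomials of degree < 2; multiplication is
multiplication of polynomials modulo p.

Omega^1 is free as a left A-module on omega = dx, so an element a omega is
represented by its coefficient a in A.  Likewise Omega^1 (x)_A Omega^1 is free on
omega (x) omega, Omega^1 (x)_A Omega^1 (x)_A Omega^1 on omega (x) omega (x) omega,
and Omega^2 is free on Vol = omega ^ omega: elements are represented by their
coefficients in A.
\<close>

definition relP :: "bool \<Rightarrow> 'k::field \<Rightarrow> 'k poly" where
  "relP c l = (if c then [:-l, 0, 1:] else [:-l, -1, 1:])"


definition Alg :: "bool \<Rightarrow> 'k::field \<Rightarrow> 'k poly set" where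
  "Alg c l = {q. degree q < 2}"

definition mA :: "bool \<Rightarrow> 'k::field \<Rightarrow> 'k poly \<Rightarrow> 'k poly \<Rightarrow> 'k poly" where
  "mA c l a b = (a * b) mod relP c l"

text \<open>The defining relation omega x = r omega: r = -x in the first case,
  r = 1 - x in the second case.\<close>
definition omx :: "bool \<Rightarrow> 'k::field poly" where
  "omx c = (if c then [:0, -1:] else [:1, -1:])"

text \<open>Commutation omega a = th(a) omega, for a = a0 + a1 x (follows from the relation).\<close>
definition th :: "bool \<Rightarrow> 'k::field poly \<Rightarrow> 'k poly" where
  "th c a = [:coeff a 0:] + smult (coeff a 1) (omx c)"

text \<open>Universal differential: d(a0 + a1 x) = a1 dx = a1 omega (coefficient of omega).\<close>
definition dA :: "'k::field poly \<Rightarrow> 'k poly" where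
  "dA a = [:coeff a 1:]"

text \<open>Right action on Omega^1: (q omega) a = q th(a) omega.\<close>
definition rOm :: "bool \<Rightarrow> 'k::field \<Rightarrow> 'k poly \<Rightarrow> 'k poly \<Rightarrow> 'k poly" where
  "rOm c l q a = mA c l q (th c a)"

text \<open>Tensor product Omega^1 x Omega^1 \<rightarrow> Omega^1 (x)_A Omega^1:
  (p omega) (x) (q omega) = p th(q) omega (x) omega.\<close>
definition tns :: "bool \<Rightarrow> 'k::field \<Rightarrow> 'k poly \<Rightarrow> 'k poly \<Rightarrow> 'k poly" where
  "tns c l p q = mA c l p (th c q)"

text \<open>Right action on Omega^1 (x)_A Omega^1: (h omega(x)omega) a = h th(th(a)) omega(x)omega.\<close>
definition rT :: "bool \<Rightarrow> 'k::field \<Rightarrow> 'k poly \<Rightarrow> 'k poly \<Rightarrow> 'k poly" where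
  "rT c l h a = mA c l h (th c (th c a))"

text \<open>Right action on Omega^2: (h Vol) a = h th(th(a)) Vol.\<close>
definition rV :: "bool \<Rightarrow> 'k::field \<Rightarrow> 'k poly \<Rightarrow> 'k poly \<Rightarrow> 'k poly" where
  "rV c l h a = mA c l h (th c (th c a))"

text \<open>Wedge product Omega^1 x Omega^1 \<rightarrow> Omega^2: (p omega) ^ (q omega) = p th(q) Vol.
  On Omega^1 (x)_A Omega^1, h omega (x) omega = (h omega) (x) omega maps to wedge1 h 1.\<close>
definition wedge1 :: "bool \<Rightarrow> 'k::field \<Rightarrow> 'k poly \<Rightarrow> 'k poly \<Rightarrow> 'k poly" where
  "wedge1 c l p q = mA c l p (th c q)"

text \<open>Exterior derivative on Omega^1: d(q omega) = dq ^ omega + q d omega, with d omega = 0.\<close>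
definition dOm :: "bool \<Rightarrow> 'k::field \<Rightarrow> 'k poly \<Rightarrow> 'k poly" where
  "dOm c l q = wedge1 c l (dA q) 1"

text \<open>Triple tensor products:
  (h omega(x)omega) (x) (q omega) = h th(th(q)) omega(x)omega(x)omega, and
  (p omega) (x) (h omega(x)omega) = p th(h) omega(x)omega(x)omega.\<close>
definition t21 :: "bool \<Rightarrow> 'k::field \<Rightarrow> 'k poly \<Rightarrow> 'k poly \<Rightarrow> 'k poly" where
  "t21 c l h q = mA c l h (th c (th c q))"

definition t12 :: "bool \<Rightarrow> 'k::field \<Rightarrow> 'k poly \<Rightarrow> 'k poly \<Rightarrow> 'k poly" where
  "t12 c l p h = mA c l p (th c h)"

definition vol_central :: "bool \<Rightarrow> 'k::field \<Rightarrow> bool" where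
  "vol_central c l \<longleftrightarrow> (\<forall>a\<in>Alg c l. mA c l a 1 = rV c l 1 a)"

definition central_T :: "bool \<Rightarrow> 'k::field \<Rightarrow> 'k poly \<Rightarrow> bool" where
  "central_T c l h \<longleftrightarrow> (\<forall>a\<in>Alg c l. mA c l a h = rT c l h a)"

definition qsym :: "bool \<Rightarrow> 'k::field \<Rightarrow> 'k poly \<Rightarrow> bool" where
  "qsym c l h \<longleftrightarrow> wedge1 c l h 1 = 0"

text \<open>Left connection, represented by N with nabla(q omega) = N(q) omega (x) omega.\<close>
definition left_conn :: "bool \<Rightarrow> 'k::field \<Rightarrow> ('k poly \<Rightarrow> 'k poly) \<Rightarrow> bool" where
  "left_conn c l N \<longleftrightarrow>
     (\<forall>q\<in>Alg c l. N q \<in> Alg c l) \<and>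
     (\<forall>q\<in>Alg c l. \<forall>r\<in>Alg c l. N (q + r) = N q + N r) \<and>
     (\<forall>t q. q \<in> Alg c l \<longrightarrow> N (smult t q) = smult t (N q)) \<and>
     (\<forall>a\<in>Alg c l. \<forall>q\<in>Alg c l. N (mA c l a q) = mA c l a (N q) + tns c l (dA a) q)"

definition bimod_map_T :: "bool \<Rightarrow> 'k::field \<Rightarrow> ('k poly \<Rightarrow> 'k poly) \<Rightarrow> bool" where
  "bimod_map_T c l S \<longleftrightarrow>
     (\<forall>h\<in>Alg c l. S h \<in> Alg c l) \<and>
     (\<forall>h\<in>Alg c l. \<forall>h'\<in>Alg c l. S (h + h') = S h + S h') \<and>
     (\<forall>a\<in>Alg c l. \<forall>h\<in>Alg c l. S (mA c l a h) = mA c l a (S h)) \<and>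
     (\<forall>a\<in>Alg c l. \<forall>h\<in>Alg c l. S (rT c l h a) = rT c l (S h) a)"

definition bimod_conn :: "bool \<Rightarrow> 'k::field \<Rightarrow> ('k poly \<Rightarrow> 'k poly) \<Rightarrow> ('k poly \<Rightarrow> 'k poly) \<Rightarrow> bool" where
  "bimod_conn c l N S \<longleftrightarrow> left_conn c l N \<and> bimod_map_T c l S \<and>
     (\<forall>q\<in>Alg c l. \<forall>a\<in>Alg c l.
        N (rOm c l q a) = rT c l (N q) a + S (tns c l q (dA a)))"

definition torsion_free :: "bool \<Rightarrow> 'k::field \<Rightarrow> ('k poly \<Rightarrow> 'k poly) \<Rightarrow> bool" where
  "torsion_free c l N \<longleftrightarrow> (\<forall>q\<in>Alg c l. wedge1 c l (N q) 1 = dOm c l q)"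

text \<open>Metric compatibility for the element g omega (x) omega = (g omega) (x) omega:
  (nabla (x) id) g + (sigma (x) id)(id (x) nabla) g = 0.\<close>
definition metric_compat :: "bool \<Rightarrow> 'k::field \<Rightarrow> 'k poly \<Rightarrow> ('k poly \<Rightarrow> 'k poly) \<Rightarrow> ('k poly \<Rightarrow> 'k poly) \<Rightarrow> bool" where
  "metric_compat c l g N S \<longleftrightarrow>
     t21 c l (N g) 1 + t21 c l (S (t12 c l g (N 1))) 1 = 0"

definition QLC :: "bool \<Rightarrow> 'k::field \<Rightarrow> 'k poly \<Rightarrow> ('k poly \<Rightarrow> 'k poly) \<Rightarrow> bool" where
  "QLC c l g N \<longleftrightarrow> (\<exists>S. bimod_conn c l N S \<and> torsion_free c l N \<and> metric_compat c l g N S)"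

text \<open>Invertibility in A, and quantum metric (existence of the inverse bimodule map
  ( , ) : Omega^1 (x)_A Omega^1 \<rightarrow> A).\<close>
definition invertibleA :: "bool \<Rightarrow> 'k::field \<Rightarrow> 'k poly \<Rightarrow> bool" where
  "invertibleA c l g \<longleftrightarrow> (\<exists>h\<in>Alg c l. mA c l g h = 1)"

definition is_qmetric :: "bool \<Rightarrow> 'k::field \<Rightarrow> 'k poly \<Rightarrow> bool" where
  "is_qmetric c l g \<longleftrightarrow> (\<exists>B.
     (\<forall>h\<in>Alg c l. B h \<in> Alg c l) \<and>
     (\<forall>h\<in>Alg c l. \<forall>h'\<in>Alg c l. B (h + h') = B h + B h') \<and>
     (\<forall>a\<in>Alg c l. \<forall>h\<in>Alg c l. B (mA c l a h) = mA c l a (B h)) \<and>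
     (\<forall>a\<in>Alg c l. \<forall>h\<in>Alg c l. B (rT c l h a) = mA c l (B h) a) \<and>
     (\<forall>\<eta>\<in>Alg c l. mA c l (B (tns c l \<eta> g)) 1 = \<eta>) \<and>
     (\<forall>\<eta>\<in>Alg c l. rOm c l g (B (tns c l 1 \<eta>)) = \<eta>))"

end

theory Submission imports Defs begin

lemma alg_eq: "q \<in> Alg c l \<Longrightarrow> q = [:coeff q 0, coeff q 1:]"
proof (rule poly_eqI)
  fix n assume q: "q \<in> Alg c l"
  then have d: "degree q < 2" by (simp add: Alg_def)
  show "coeff q n = coeff [:coeff q 0, coeff q 1:] n"
  proof (cases "n < 2")
    case True then have "n = 0 \<or> n = 1" by auto
    then show ?thesis by auto
  next
    case False
    then obtain m where m: "n = Suc (Suc m)" by (metis add_2_eq_Suc le_Suc_ex not_less)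
    have "coeff q n = 0" using d False by (intro coeff_eq_0) auto
    then show ?thesis by (simp add: m)
  qed
qed

lemma pair_Alg[simp]: "[:u, v:] \<in> Alg c l"
  unfolding Alg_def by (simp add: degree_pCons_eq_if)

lemma const_Alg[simp]: "[:u:] \<in> Alg c l"
  unfolding Alg_def by simp

lemma relP_deg: "degree (relP c l) = 2"
  unfolding relP_def by (auto simp: degree_pCons_eq_if)

lemma mA_pair: "mA c l [:a0, a1:] [:b0, b1:] =
   (if c then [:a0*b0 + l*a1*b1, a0*b1+a1*b0:] else [:a0*b0 + l*a1*b1, a0*b1+a1*b0+a1*b1:])"
proof -
  let ?r = "(if c then [:a0*b0 + l*a1*b1, a0*b1+a1*b0:] else [:a0*b0 + l*a1*b1, a0*b1+a1*b0+a1*b1:])"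
  have e: "[:a0, a1:] * [:b0, b1:] = ?r + [:a1*b1:] * relP c l"
    by (cases c) (simp_all add: relP_def algebra_simps)
  have "degree ?r < degree (relP c l)" by (simp add: relP_deg degree_pCons_eq_if)
  then show ?thesis unfolding mA_def e mod_mult_self1
    by (rule mod_poly_less)
qed

lemma mA_Alg[simp]: "mA c l a b \<in> Alg c l"
proof -
  have nz: "relP c l \<noteq> 0" using relP_deg[of c l] by auto
  have "a * b mod relP c l = 0 \<or> degree (a * b mod relP c l) < degree (relP c l)"
    by (rule degree_mod_less[OF nz])
  then show ?thesis unfolding mA_def Alg_def relP_deg by auto
qed

lemma mA_eq: "a \<in> Alg c l \<Longrightarrow> b \<in> Alg c l \<Longrightarrow> mA c l a b =
   (if c then [:coeff a 0*coeff b 0 + l*coeff a 1*coeff b 1, coeff a 0*coeff b 1+coeff a 1*coeff b 0:]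
    else [:coeff a 0*coeff b 0 + l*coeff a 1*coeff b 1, coeff a 0*coeff b 1+coeff a 1*coeff b 0+coeff a 1*coeff b 1:])"
  by (metis alg_eq mA_pair)

lemma th_eq: "th c a = [:coeff a 0 + (if c then 0 else coeff a 1), - coeff a 1:]"
  unfolding th_def omx_def by auto

lemma th_Alg[simp]: "th c a \<in> Alg c l" by (simp add: th_eq)
lemma dA_Alg[simp]: "dA a \<in> Alg c l" by (simp add: dA_def)
lemma one_pc: "[:1:] = (1::'k::field poly)" by (simp add: one_pCons)

lemma coeff_one_1: "coeff (1::'k::field poly) 1 = 0" by simp

lemma dA_pair: "dA [:u, v:] = [:v:]" by (simp add: dA_def)

lemma one_Alg[simp]: "1 \<in> Alg c l" using const_Alg[of 1] by (simp only: one_pc)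

lemma neg_one_pc: "[:-1:] = (-1::'k::field poly)"
proof -
  have "[:-1:] = - [:(1::'k):]" by simp
  then show ?thesis by (simp only: one_pc)
qed
lemma zero_Alg[simp]: "0 \<in> Alg c l" using const_Alg[of 0] by simp

lemma coeff_pCons_1[simp]: "coeff (pCons a p) 1 = coeff p 0"
  by (simp add: coeff_pCons)

lemma uminus_Alg[simp]: "h \<in> Alg c l \<Longrightarrow> - h \<in> Alg c l" by (simp add: Alg_def)
lemma plus_Alg[simp]: "h \<in> Alg c l \<Longrightarrow> k \<in> Alg c l \<Longrightarrow> h + k \<in> Alg c l"
  unfolding Alg_def using degree_add_le_max[of h k] by auto

lemma mA_comm: "a \<in> Alg c l \<Longrightarrow> b \<in> Alg c l \<Longrightarrow> mA c l a b = mA c l b a"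
  by (simp add: mA_eq algebra_simps)

lemma mA_assoc: "a \<in> Alg c l \<Longrightarrow> b \<in> Alg c l \<Longrightarrow> d \<in> Alg c l \<Longrightarrow>
   mA c l (mA c l a b) d = mA c l a (mA c l b d)"
  by (cases c) (simp_all add: mA_eq algebra_simps)

lemma mA_one[simp]: "a \<in> Alg c l \<Longrightarrow> mA c l a 1 = a"
proof -
  assume a: "a \<in> Alg c l"
  then have "mA c l a 1 = [:coeff a 0, coeff a 1:]" by (simp add: mA_eq)
  then show ?thesis using alg_eq[OF a] by simp
qed

lemma mA_one_left[simp]: "a \<in> Alg c l \<Longrightarrow> mA c l 1 a = a"
  using mA_comm mA_one one_Alg by metis

lemma mA_zero[simp]: "mA c l a 0 = 0" "mA c l 0 a = 0" by (simp_all add: mA_def)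

lemma th_one[simp]: "th c 1 = 1" by (simp add: th_eq one_pc)
lemma th_zero[simp]: "th c 0 = 0" by (simp add: th_eq)

lemma th_th[simp]: "a \<in> Alg c l \<Longrightarrow> th c (th c a) = a"
proof -
  assume a: "a \<in> Alg c l"
  have "th c (th c a) = [:coeff a 0, coeff a 1:]" by (simp add: th_eq)
  then show ?thesis using alg_eq[OF a] by simp
qed

lemma th_mult: "a \<in> Alg c l \<Longrightarrow> b \<in> Alg c l \<Longrightarrow> th c (mA c l a b) = mA c l (th c a) (th c b)"
  by (cases c) (simp_all add: mA_eq th_eq algebra_simps)

lemma mA_add: "a \<in> Alg c l \<Longrightarrow> b \<in> Alg c l \<Longrightarrow> d \<in> Alg c l \<Longrightarrow>
   mA c l (a + b) d = mA c l a d + mA c l b d"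
  by (cases c) (simp_all add: mA_eq algebra_simps)

lemma mA_neg: "a \<in> Alg c l \<Longrightarrow> b \<in> Alg c l \<Longrightarrow> mA c l a (- b) = - mA c l a b"
  by (cases c) (simp_all add: mA_eq algebra_simps)

lemma vol_central_ok: "vol_central c l"
  unfolding vol_central_def rV_def by simp

lemma central_ok: "h \<in> Alg c l \<Longrightarrow> central_T c l h"
  unfolding central_T_def rT_def using mA_comm by auto

lemma qsym_ok: "h \<in> Alg c l \<Longrightarrow> h \<noteq> 0 \<Longrightarrow> \<not> qsym c l h"
  unfolding qsym_def wedge1_def by simp

lemma lc_formula: "left_conn c l N \<Longrightarrow> q \<in> Alg c l \<Longrightarrow> N q = mA c l q (N 1) + [:coeff q 1:]"
proof -
  assume N: "left_conn c l N" and q: "q \<in> Alg c l"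
  then have "N (mA c l q 1) = mA c l q (N 1) + tns c l (dA q) 1"
    using one_Alg[of c l] unfolding left_conn_def by blast
  moreover have "tns c l (dA q) 1 = [:coeff q 1:]" by (simp add: tns_def dA_def)
  ultimately show ?thesis using q by simp
qed

lemma tf_iff: "left_conn c l N \<Longrightarrow> torsion_free c l N \<longleftrightarrow> (\<forall>q\<in>Alg c l. N q = [:coeff q 1:])"
  unfolding torsion_free_def wedge1_def dOm_def left_conn_def by (auto simp: dA_def)

lemma tf_N: "left_conn c l N \<Longrightarrow> torsion_free c l N \<Longrightarrow> q \<in> Alg c l \<Longrightarrow> N q = [:coeff q 1:]"
proof -
  assume N: "left_conn c l N" and tf: "torsion_free c l N" and q: "q \<in> Alg c l"
  have all: "\<forall>q\<in>Alg c l. N q = [:coeff q 1:]" by (rule iffD1[OF tf_iff[OF N] tf])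
  show ?thesis by (rule bspec[OF all q])
qed

lemma tf_iff2: "left_conn c l N \<Longrightarrow> torsion_free c l N \<longleftrightarrow> N 1 = 0"
proof -
  assume N: "left_conn c l N"
  show ?thesis
  proof
    assume tf: "torsion_free c l N"
    have "N 1 = [:coeff 1 1:]" by (rule tf_N[OF N tf one_Alg])
    then show "N 1 = 0" by (simp only: coeff_one_1 pCons_0_0)
  next
    assume N1: "N 1 = 0"
    have "\<forall>q\<in>Alg c l. N q = [:coeff q 1:]"
    proof
      fix q assume q: "q \<in> Alg c l"
      have "N q = mA c l q (N 1) + [:coeff q 1:]" by (rule lc_formula[OF N q])
      also have "\<dots> = [:coeff q 1:]" unfolding N1 by simp
      finally show "N q = [:coeff q 1:]" .
    qed
    then show "torsion_free c l N" by (rule iffD2[OF tf_iff[OF N]])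
  qed
qed

definition N0 :: "'k::field poly \<Rightarrow> 'k poly" where "N0 q = [:coeff q 1:]"

lemma N0_lc: "left_conn c l N0"
  unfolding left_conn_def N0_def tns_def dA_def
  by (cases c) (auto simp: mA_eq th_eq algebra_simps)

lemma N0_tf: "torsion_free c l N0"
  using tf_iff[OF N0_lc] by (simp add: N0_def)

lemma neg_bm: "bimod_map_T c l (\<lambda>h. - h)"
  unfolding bimod_map_T_def rT_def by (simp add: mA_neg mA_comm[of _ "- _"] mA_comm[of _ "_"])

lemma bc_neg: "left_conn c l N \<Longrightarrow> torsion_free c l N \<Longrightarrow> bimod_conn c l N (\<lambda>h. - h)"
proof -
  assume N: "left_conn c l N" and tf: "torsion_free c l N"
  have Nq: "\<And>q. q \<in> Alg c l \<Longrightarrow> N q = [:coeff q 1:]" by (rule tf_N[OF N tf])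
  have "\<forall>q\<in>Alg c l. \<forall>a\<in>Alg c l.
        N (rOm c l q a) = rT c l (N q) a + - (tns c l q (dA a))"
  proof (intro ballI)
    fix q a assume q: "q \<in> Alg c l" and a: "a \<in> Alg c l"
    show "N (rOm c l q a) = rT c l (N q) a + - (tns c l q (dA a))"
      unfolding Nq[OF q] rOm_def Nq[OF mA_Alg] rT_def tns_def dA_def using q a
      by (cases c) (simp_all add: mA_eq th_eq algebra_simps)
  qed
  then show ?thesis unfolding bimod_conn_def using N neg_bm by blast
qed

lemma S_one: "left_conn c l N \<Longrightarrow> torsion_free c l N \<Longrightarrow> bimod_conn c l N S \<Longrightarrow> S 1 = - 1"
proof -
  assume N: "left_conn c l N" and tf: "torsion_free c l N" and bc: "bimod_conn c l N S"
  have Nq: "\<And>q. q \<in> Alg c l \<Longrightarrow> N q = [:coeff q 1:]" by (rule tf_N[OF N tf])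
  have N1: "N 1 = 0" using tf_iff2[OF N] tf by simp
  have "N (rOm c l 1 [:0,1:]) = rT c l (N 1) [:0,1:] + S (tns c l 1 (dA [:0,1:]))"
    using bc one_Alg[of c l] pair_Alg[of 0 1 c l] unfolding bimod_conn_def by blast
  moreover have "N (rOm c l 1 [:0,1:]) = - 1" unfolding rOm_def mA_one_left[OF th_Alg] Nq[OF th_Alg]
    by (simp add: th_eq neg_one_pc)
  moreover have "tns c l 1 (dA [:0,1:]) = 1"
  proof -
    have "tns c l 1 (dA [:0,1:]) = tns c l 1 1"
      unfolding dA_pair unfolding one_pc ..
    also have "\<dots> = 1" unfolding tns_def th_one by (rule mA_one[OF one_Alg])
    finally show ?thesis .
  qed
  ultimately show ?thesis using N1 by (simp add: rT_def)
qed

lemma S_all: "left_conn c l N \<Longrightarrow> torsion_free c l N \<Longrightarrow> bimod_conn c l N S \<Longrightarrow> h \<in> Alg c l \<Longrightarrow> S h = - h"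
proof -
  assume N: "left_conn c l N" and tf: "torsion_free c l N" and bc: "bimod_conn c l N S" and h: "h \<in> Alg c l"
  have "S (mA c l h 1) = mA c l h (S 1)"
    using bc h one_Alg[of c l] unfolding bimod_conn_def bimod_map_T_def by blast
  then show ?thesis using S_one[OF N tf bc] h by (simp add: mA_neg)
qed

lemma QLC_facts: "QLC c l g N \<Longrightarrow> left_conn c l N \<and> torsion_free c l N \<and> N 1 = 0"
  unfolding QLC_def bimod_conn_def using tf_iff2 by blast

lemma QLC_const: "g \<in> Alg c l \<Longrightarrow> QLC c l g N \<Longrightarrow> coeff g 1 = 0"
proof -
  assume g: "g \<in> Alg c l" and Q: "QLC c l g N"
  then obtain S where bc: "bimod_conn c l N S" and tf: "torsion_free c l N"
     and mc: "metric_compat c l g N S" unfolding QLC_def by blast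
  have N: "left_conn c l N" using bc unfolding bimod_conn_def by blast
  have N1: "N 1 = 0" using QLC_facts[OF Q] by simp
  have Ng: "N g = [:coeff g 1:]" by (rule tf_N[OF N tf g])
  have S0: "S 0 = 0" using S_all[OF N tf bc, of 0] by simp
  from mc have "t21 c l (N g) 1 = 0"
    unfolding metric_compat_def N1 by (simp add: t12_def S0 t21_def)
  then have "mA c l [:coeff g 1:] 1 = 0" unfolding t21_def Ng th_one .
  then have "[:coeff g 1:] = 0" by (simp only: mA_one[OF const_Alg])
  then show ?thesis by simp
qed

lemma QLC_N0: "g = [:t:] \<Longrightarrow> QLC c l g N0"
  unfolding QLC_def
  apply (rule exI[of _ "\<lambda>h. - h"])
  apply (intro conjI)
    apply (rule bc_neg[OF N0_lc N0_tf])
   apply (rule N0_tf)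
  apply (simp add: metric_compat_def N0_def t12_def t21_def)
  done

lemma QLC_iff:
  assumes g: "g \<in> Alg c l" and inv: "invertibleA c l g"
  shows "(\<exists>N. QLC c l g N) \<longleftrightarrow> (\<exists>t. t \<noteq> 0 \<and> g = [:t:])"
proof
  assume "\<exists>N. QLC c l g N"
  then obtain N where "QLC c l g N" by blast
  then have "coeff g 1 = 0" using QLC_const g by blast
  then have ge: "g = [:coeff g 0:]" using alg_eq[OF g] by simp
  have "g \<noteq> 0" using inv unfolding invertibleA_def by auto
  then show "\<exists>t. t \<noteq> 0 \<and> g = [:t:]" using ge by (metis pCons_0_0)
next
  assume "\<exists>t. t \<noteq> 0 \<and> g = [:t:]"
  then obtain t where gt: "g = [:t:]" by blast
  show "\<exists>N. QLC c l g N" by (rule exI[of _ N0], rule QLC_N0[OF gt])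
qed

lemma qmetric: "g \<in> Alg c l \<Longrightarrow> invertibleA c l g \<Longrightarrow> is_qmetric c l g"
proof -
  assume g: "g \<in> Alg c l" and inv: "invertibleA c l g"
  from inv have "\<exists>h\<in>Alg c l. mA c l g h = 1" unfolding invertibleA_def .
  then obtain h where h: "h \<in> Alg c l" and gh: "mA c l g h = 1" by (rule bexE)
  define B where "B k = mA c l k (th c h)" for k
  have thh: "th c h \<in> Alg c l" by (rule th_Alg)
  show ?thesis unfolding is_qmetric_def
  proof (intro exI[of _ B] conjI ballI)
    fix k assume "k \<in> Alg c l" show "B k \<in> Alg c l" unfolding B_def by (rule mA_Alg)
  next
    fix k k' assume k: "k \<in> Alg c l" and k': "k' \<in> Alg c l"
    show "B (k + k') = B k + B k'" unfolding B_def by (rule mA_add[OF k k' thh])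
  next
    fix a k assume a: "a \<in> Alg c l" and k: "k \<in> Alg c l"
    show "B (mA c l a k) = mA c l a (B k)" unfolding B_def by (rule mA_assoc[OF a k thh])
  next
    fix a k assume a: "a \<in> Alg c l" and k: "k \<in> Alg c l"
    have "B (rT c l k a) = mA c l (mA c l k a) (th c h)" unfolding B_def rT_def th_th[OF a] ..
    also have "\<dots> = mA c l k (mA c l a (th c h))" by (rule mA_assoc[OF k a thh])
    also have "\<dots> = mA c l k (mA c l (th c h) a)" by (simp only: mA_comm[OF a thh])
    also have "\<dots> = mA c l (B k) a" unfolding B_def by (rule mA_assoc[OF k thh a, symmetric])
    finally show "B (rT c l k a) = mA c l (B k) a" .
  next
    fix e assume e: "e \<in> Alg c l"
    have "B (tns c l e g) = mA c l (mA c l e (th c g)) (th c h)" unfolding B_def tns_def ..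
    also have "\<dots> = mA c l e (mA c l (th c g) (th c h))" by (rule mA_assoc[OF e th_Alg thh])
    also have "\<dots> = mA c l e (th c (mA c l g h))" by (simp only: th_mult[OF g h])
    also have "\<dots> = e" using e by (simp only: gh th_one mA_one)
    finally have "B (tns c l e g) = e" .
    then show "mA c l (B (tns c l e g)) 1 = e" using e by (simp only: mA_one)
  next
    fix e assume e: "e \<in> Alg c l"
    have "B (tns c l 1 e) = mA c l (mA c l 1 (th c e)) (th c h)" unfolding B_def tns_def ..
    also have "\<dots> = mA c l (th c e) (th c h)" by (simp only: mA_one_left th_Alg)
    also have "\<dots> = th c (mA c l e h)" by (simp only: th_mult[OF e h])
    finally have X: "B (tns c l 1 e) = th c (mA c l e h)" .
    have "rOm c l g (B (tns c l 1 e)) = mA c l g (mA c l e h)"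
      unfolding rOm_def X th_th[OF mA_Alg] ..
    also have "\<dots> = mA c l (mA c l g e) h" by (rule mA_assoc[OF g e h, symmetric])
    also have "\<dots> = mA c l (mA c l e g) h" by (simp only: mA_comm[OF g e])
    also have "\<dots> = mA c l e (mA c l g h)" by (rule mA_assoc[OF e g h])
    also have "\<dots> = e" using e by (simp only: gh mA_one)
    finally show "rOm c l g (B (tns c l 1 e)) = e" .
  qed
qed

theorem mainTheorem2:
  fixes c :: bool and l :: "'k::field"
  shows
    "vol_central c l \<and>
     (\<forall>h\<in>Alg c l. central_T c l h) \<and>
     (\<forall>h\<in>Alg c l. h \<noteq> 0 \<longrightarrow> \<not> qsym c l h) \<and>
     (\<exists>N. left_conn c l N \<and> torsion_free c l N) \<and>
     (\<forall>N. left_conn c l N \<longrightarrow> (torsion_free c l N \<longleftrightarrow> N 1 = 0)) \<and>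
     (\<forall>N. left_conn c l N \<and> torsion_free c l N \<longrightarrow>
         bimod_conn c l N (\<lambda>h. - h) \<and>
         (\<forall>S. bimod_conn c l N S \<longrightarrow> S 1 = - 1)) \<and>
     (\<forall>g\<in>Alg c l. invertibleA c l g \<longrightarrow>
         is_qmetric c l g \<and>
         ((\<exists>N. QLC c l g N) \<longleftrightarrow> (\<exists>t. t \<noteq> 0 \<and> g = [:t:])) \<and>
         (\<forall>N. QLC c l g N \<longrightarrow> N 1 = 0) \<and>
         (\<forall>N N'. QLC c l g N \<and> QLC c l g N' \<longrightarrow> (\<forall>q\<in>Alg c l. N q = N' q)))"
proof -
  have A: "\<forall>N. left_conn c l N \<and> torsion_free c l N \<longrightarrow>
         bimod_conn c l N (\<lambda>h. - h) \<and> (\<forall>S. bimod_conn c l N S \<longrightarrow> S 1 = - 1)"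
    using bc_neg S_one by blast
  have B: "\<forall>g\<in>Alg c l. invertibleA c l g \<longrightarrow>
         is_qmetric c l g \<and>
         ((\<exists>N. QLC c l g N) \<longleftrightarrow> (\<exists>t. t \<noteq> 0 \<and> g = [:t:])) \<and>
         (\<forall>N. QLC c l g N \<longrightarrow> N 1 = 0) \<and>
         (\<forall>N N'. QLC c l g N \<and> QLC c l g N' \<longrightarrow> (\<forall>q\<in>Alg c l. N q = N' q))"
  proof (intro ballI impI conjI allI)
    fix g N N' q assume g: "g \<in> Alg c l" and i: "invertibleA c l g"
    show "is_qmetric c l g" using qmetric g i by blast
    show "(\<exists>N. QLC c l g N) \<longleftrightarrow> (\<exists>t. t \<noteq> 0 \<and> g = [:t:])" using QLC_iff g i by blast
    show "QLC c l g N \<Longrightarrow> N 1 = 0" using QLC_facts by blast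
    assume "QLC c l g N \<and> QLC c l g N'" and q: "q \<in> Alg c l"
    then have 1: "left_conn c l N" "torsion_free c l N" "left_conn c l N'" "torsion_free c l N'"
      using QLC_facts by blast+
    have "N q = [:coeff q 1:]" by (rule tf_N[OF 1(1) 1(2) q])
    moreover have "N' q = [:coeff q 1:]" by (rule tf_N[OF 1(3) 1(4) q])
    ultimately show "N q = N' q" by simp
  qed
  have C: "\<exists>N. left_conn c l N \<and> torsion_free c l N" using N0_lc N0_tf by blast
  have D: "\<forall>N. left_conn c l N \<longrightarrow> (torsion_free c l N \<longleftrightarrow> N 1 = 0)" using tf_iff2 by blast
  have E: "\<forall>h\<in>Alg c l. central_T c l h" using central_ok by blast
  have F: "\<forall>h\<in>Alg c l. h \<noteq> 0 \<longrightarrow> \<not> qsym c l h" using qsym_ok by blast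
  show ?thesis using vol_central_ok E F C D A B by (intro conjI)
qed

end
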